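(* Let $A$ be a local ring with maximal ideal $\mathfrak m$ and residue field $k$, and assume $2\in A^\times$. Then $u(A)$ equals the smallest $u\in\mathbb Z_{\geq1}\cup\{\infty\}$ such that every non-singular quadratic module $(V,q)$ over $A$ with $\dim_k V/\mathfrak mV\geq u$ is universal.
   Context: A quadratic module over $A$ is $(V,q)$ with $V$ finitely generated projective, $q(ax)=a^2q(x)$ and $B_q(x,y)=q(x+y)-q(x)-q(y)$ bilinear; non-singular if $x\mapsto B_q(x,-)$ is an isomorphism $V\to\mathrm{Hom}_A(V,A)$. $(V,q)$ is isotropic if there is $x\in V\setminus\mathfrak mV$ with $q(x)=0$, anisotropic otherwise, and universal if it represents every unit, i.e. for each $a\in A^\times$ there is $x$ with $q(x)=a$. $u(A)=\sup\{\dim_k V/\mathfrak mV : (V,q)\text{ non-singular and anisotropic}\}$. *)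

theory Defs
  imports Main "HOL-Library.Extended_Nat"
begin

text \<open>Local ring (commutative, 1 \<noteq> 0): the non-units form an ideal, i.e. they are closed
  under addition (closure under multiplication by ring elements is automatic).\<close>
definition local_ring :: "'a::comm_ring_1 itself \<Rightarrow> bool" where
  "local_ring _ \<longleftrightarrow> (0::'a) \<noteq> 1 \<and>
     (\<forall>a b::'a. \<not> a dvd 1 \<and> \<not> b dvd 1 \<longrightarrow> \<not> (a + b) dvd 1)"

definition max_ideal :: "'a::comm_ring_1 set" where
  "max_ideal = {a. \<not> a dvd 1}"

text \<open>Over a local ring every finitely generated projective module is free; we model a
  module of rank n as A^n, i.e. functions nat => A vanishing from index n on.\<close>
definition vecs :: "nat \<Rightarrow> (nat \<Rightarrow> 'a::comm_ring_1) set" where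
  "vecs n = {x. \<forall>i\<ge>n. x i = 0}"

definition polar :: "((nat \<Rightarrow> 'a::comm_ring_1) \<Rightarrow> 'a) \<Rightarrow> (nat \<Rightarrow> 'a) \<Rightarrow> (nat \<Rightarrow> 'a) \<Rightarrow> 'a" where
  "polar q x y = q (\<lambda>i. x i + y i) - q x - q y"

definition linear_form :: "nat \<Rightarrow> ((nat \<Rightarrow> 'a::comm_ring_1) \<Rightarrow> 'a) \<Rightarrow> bool" where
  "linear_form n f \<longleftrightarrow>
     (\<forall>x\<in>vecs n. \<forall>y\<in>vecs n. f (\<lambda>i. x i + y i) = f x + f y) \<and>
     (\<forall>a. \<forall>x\<in>vecs n. f (\<lambda>i. a * x i) = a * f x)"

definition quadratic_module :: "nat \<Rightarrow> ((nat \<Rightarrow> 'a::comm_ring_1) \<Rightarrow> 'a) \<Rightarrow> bool" where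
  "quadratic_module n q \<longleftrightarrow>
     (\<forall>a. \<forall>x\<in>vecs n. q (\<lambda>i. a * x i) = a ^ 2 * q x) \<and>
     (\<forall>x\<in>vecs n. linear_form n (polar q x)) \<and>
     (\<forall>y\<in>vecs n. linear_form n (\<lambda>x. polar q x y))"

definition nonsingular_qm :: "nat \<Rightarrow> ((nat \<Rightarrow> 'a::comm_ring_1) \<Rightarrow> 'a) \<Rightarrow> bool" where
  "nonsingular_qm n q \<longleftrightarrow> quadratic_module n q \<and>
     (\<forall>x\<in>vecs n. \<forall>x'\<in>vecs n. (\<forall>y\<in>vecs n. polar q x y = polar q x' y) \<longrightarrow> x = x') \<and>
     (\<forall>f. linear_form n f \<longrightarrow> (\<exists>x\<in>vecs n. \<forall>y\<in>vecs n. polar q x y = f y))"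

text \<open>x \<notin> m V  iff some coordinate of x is not in the maximal ideal.\<close>
definition isotropic :: "nat \<Rightarrow> ((nat \<Rightarrow> 'a::comm_ring_1) \<Rightarrow> 'a) \<Rightarrow> bool" where
  "isotropic n q \<longleftrightarrow> (\<exists>x\<in>vecs n. (\<exists>i<n. x i \<notin> max_ideal) \<and> q x = 0)"

definition anisotropic :: "nat \<Rightarrow> ((nat \<Rightarrow> 'a::comm_ring_1) \<Rightarrow> 'a) \<Rightarrow> bool" where
  "anisotropic n q \<longleftrightarrow> \<not> isotropic n q"

definition universal :: "nat \<Rightarrow> ((nat \<Rightarrow> 'a::comm_ring_1) \<Rightarrow> 'a) \<Rightarrow> bool" where
  "universal n q \<longleftrightarrow> (\<forall>a::'a. a dvd 1 \<longrightarrow> (\<exists>x\<in>vecs n. q x = a))"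

definition u_invariant :: "'a::comm_ring_1 itself \<Rightarrow> enat" where
  "u_invariant _ = Sup {enat n | n. \<exists>q :: (nat \<Rightarrow> 'a) \<Rightarrow> 'a. nonsingular_qm n q \<and> anisotropic n q}"

end

theory Submission
  imports Defs "HOL-Library.Function_Algebras"
begin

definition sm :: "'a::comm_ring_1 \<Rightarrow> (nat \<Rightarrow> 'a) \<Rightarrow> (nat \<Rightarrow> 'a)" where
  "sm a x i = a * x i"

definition ev :: "nat \<Rightarrow> nat \<Rightarrow> 'a::comm_ring_1" where
  "ev j k = (if k = j then 1 else 0)"

lemma sm_apply[simp]: "sm a x i = a * x i" by (simp add: sm_def)
lemma ev_apply[simp]: "ev j k = (if k = j then 1 else 0)" by (simp add: ev_def)

lemma sm_add: "sm a (x + y) = sm a x + sm a y" by (rule ext) (simp add: algebra_simps)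
lemma sm_diff: "sm a (x - y) = sm a x - sm a y" by (rule ext) (simp add: algebra_simps)
lemma sm_add2: "sm (a + b) x = sm a x + sm b x" by (rule ext) (simp add: algebra_simps)
lemma sm_sm: "sm a (sm b x) = sm (a * b) x" by (rule ext) (simp add: algebra_simps)
lemma sm_one[simp]: "sm 1 x = x" by (rule ext) simp
lemma sm_zero[simp]: "sm 0 x = 0" by (rule ext) simp
lemma sm_zero2[simp]: "sm a 0 = 0" by (rule ext) simp
lemma sm_m1: "sm (-1) x = - x" by (rule ext) simp
lemma sm_minus: "sm a (- x) = - sm a x" by (rule ext) simp

lemma vecs_iff: "x \<in> vecs n \<longleftrightarrow> (\<forall>i\<ge>n. x i = 0)" by (simp add: vecs_def)
lemma vecs_0[simp]: "0 \<in> vecs n" by (simp add: vecs_def)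
lemma vecs_add[simp]: "x \<in> vecs n \<Longrightarrow> y \<in> vecs n \<Longrightarrow> x + y \<in> vecs n" by (simp add: vecs_def)
lemma vecs_diff[simp]: "x \<in> vecs n \<Longrightarrow> y \<in> vecs n \<Longrightarrow> x - y \<in> vecs n" by (simp add: vecs_def)
lemma vecs_uminus[simp]: "x \<in> vecs n \<Longrightarrow> - x \<in> vecs n" by (simp add: vecs_def)
lemma vecs_sm[simp]: "x \<in> vecs n \<Longrightarrow> sm a x \<in> vecs n" by (simp add: vecs_def)
lemma vecs_ev[simp]: "j < n \<Longrightarrow> ev j \<in> vecs n" by (simp add: vecs_def)
lemma vecs_mono: "x \<in> vecs k \<Longrightarrow> k \<le> n \<Longrightarrow> x \<in> vecs n" by (simp add: vecs_def)

lemma polar_alt: "polar q x y = q (x + y) - q x - q y"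
  by (simp add: polar_def plus_fun_def)

lemma lf_alt: "linear_form n f \<longleftrightarrow>
   (\<forall>x\<in>vecs n. \<forall>y\<in>vecs n. f (x + y) = f x + f y) \<and> (\<forall>a. \<forall>x\<in>vecs n. f (sm a x) = a * f x)"
  by (simp add: linear_form_def plus_fun_def sm_def[abs_def])

lemma lf_cong: "(\<And>x. x \<in> vecs n \<Longrightarrow> f x = g x) \<Longrightarrow> linear_form n f = linear_form n g"
  unfolding lf_alt by simp

lemma qm_alt: "quadratic_module n q \<longleftrightarrow>
     (\<forall>a. \<forall>x\<in>vecs n. q (sm a x) = a ^ 2 * q x) \<and>
     (\<forall>x\<in>vecs n. linear_form n (polar q x)) \<and>
     (\<forall>y\<in>vecs n. linear_form n (\<lambda>x. polar q x y))"
  by (simp add: quadratic_module_def sm_def[abs_def])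

lemma lfD:
  assumes "linear_form n f"
  shows "x \<in> vecs n \<Longrightarrow> y \<in> vecs n \<Longrightarrow> f (x + y) = f x + f y"
    and "x \<in> vecs n \<Longrightarrow> f (sm a x) = a * f x"
  using assms unfolding lf_alt by auto

lemma lf_zero: "linear_form n f \<Longrightarrow> f 0 = 0"
  using lfD(2)[of n f 0 0] by simp

lemma lf_uminus: "linear_form n f \<Longrightarrow> x \<in> vecs n \<Longrightarrow> f (- x) = - f x"
  using lfD(2)[of n f x "-1"] by (simp add: sm_m1)

lemma lf_diff: "linear_form n f \<Longrightarrow> x \<in> vecs n \<Longrightarrow> y \<in> vecs n \<Longrightarrow> f (x - y) = f x - f y"
  using lfD(1)[of n f x "-y"] lf_uminus[of n f y] by simp

lemma lf_mono: "linear_form n f \<Longrightarrow> k \<le> n \<Longrightarrow> linear_form k f"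
  unfolding lf_alt using vecs_mono by blast

lemma lf_add: "linear_form n f \<Longrightarrow> linear_form n g \<Longrightarrow> linear_form n (\<lambda>x. f x + g x)"
  unfolding lf_alt by (simp add: algebra_simps)

lemma lf_coord: "linear_form n (\<lambda>x. c * x k)"
  unfolding lf_alt by (simp add: algebra_simps)

lemma lf_comp:
  assumes "linear_form m f" "\<And>y. y \<in> vecs n \<Longrightarrow> L y \<in> vecs m"
    "\<And>x y. x \<in> vecs n \<Longrightarrow> y \<in> vecs n \<Longrightarrow> L (x + y) = L x + L y"
    "\<And>a x. x \<in> vecs n \<Longrightarrow> L (sm a x) = sm a (L x)"
  shows "linear_form n (\<lambda>x. f (L x))"
  using assms unfolding lf_alt by simp

lemma lf_expand:
  assumes "linear_form n f"
  shows "k \<le> n \<Longrightarrow> x \<in> vecs k \<Longrightarrow> f x = (\<Sum>i<k. x i * f (ev i))"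
proof (induction k arbitrary: x)
  case 0
  then have "x = 0" by (auto simp: vecs_def)
  then show ?case using lf_zero[OF assms] by (simp add: zero_fun_def)
next
  case (Suc k)
  define t where "t = (\<lambda>i. if i < k then x i else 0)"
  have t: "t \<in> vecs k" by (simp add: t_def vecs_def)
  have x: "x = t + sm (x k) (ev k)"
    using Suc.prems by (auto simp: t_def vecs_def)
  have tn: "t \<in> vecs n" using vecs_mono[OF t] Suc.prems by simp
  have en: "sm (x k) (ev k) \<in> vecs n" using Suc.prems by simp
  have "f (t + sm (x k) (ev k)) = f t + f (sm (x k) (ev k))"
    by (rule lfD(1)[OF assms tn en])
  then have "f x = f t + f (sm (x k) (ev k))"
    by (simp only: x[symmetric])
  also have "f (sm (x k) (ev k)) = x k * f (ev k)"
    using lfD(2)[OF assms] Suc.prems by simp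
  finally have "f x = f t + x k * f (ev k)" .
  also have "f t = (\<Sum>i<k. t i * f (ev i))" by (rule Suc.IH[OF _ t]) (use Suc.prems in simp)
  also have "\<dots> = (\<Sum>i<k. x i * f (ev i))" by (simp add: t_def del: ev_apply)
  finally show ?case by (simp del: ev_apply)
qed

lemma nonunit_add:
  assumes "local_ring TYPE('a::comm_ring_1)" "\<not> (a::'a) dvd 1" "\<not> b dvd 1"
  shows "\<not> (a + b) dvd 1"
  using assms by (simp add: local_ring_def)

lemma nonunit_uminus: "\<not> (a::'a::comm_ring_1) dvd 1 \<Longrightarrow> \<not> (- a) dvd 1"
  by simp

lemma nonunit_diff:
  assumes "local_ring TYPE('a::comm_ring_1)" "\<not> (a::'a) dvd 1" "\<not> b dvd 1"
  shows "\<not> (a - b) dvd 1"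
  using nonunit_add[OF assms(1,2), of "-b"] assms(3) by simp

lemma nonunit_mult: "\<not> (a::'a::comm_ring_1) dvd 1 \<Longrightarrow> \<not> (a * b) dvd 1"
  using dvd_mult_left by blast

lemma zero_nonunit:
  assumes "local_ring TYPE('a::comm_ring_1)" shows "\<not> (0::'a) dvd 1"
  using assms by (simp add: local_ring_def)

lemma sum_nonunit:
  assumes "local_ring TYPE('a::comm_ring_1)"
  shows "finite I \<Longrightarrow> (\<And>i. i \<in> I \<Longrightarrow> \<not> (g i::'a) dvd 1) \<Longrightarrow> \<not> sum g I dvd 1"
proof (induction I rule: finite_induct)
  case empty then show ?case using zero_nonunit[OF assms] by simp
next
  case (insert x F) then show ?case using nonunit_add[OF assms] by simp
qed

lemma unit_from_sum:
  assumes "local_ring TYPE('a::comm_ring_1)" "(a::'a) dvd 1" "\<not> b dvd 1"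
  shows "(a + b) dvd 1"
  using nonunit_diff[OF assms(1), of "a+b" b] assms by auto

lemma primitive_of_lf:
  assumes "local_ring TYPE('a::comm_ring_1)" "linear_form n f" "x \<in> vecs n" "(f x :: 'a) dvd 1"
  shows "\<exists>i<n. x i \<notin> max_ideal"
proof (rule ccontr)
  assume "\<not> ?thesis"
  then have "\<And>i. i \<in> {..<n} \<Longrightarrow> \<not> (x i * f (ev i)) dvd 1"
    by (auto simp: max_ideal_def dest: nonunit_mult)
  from sum_nonunit[OF assms(1) finite_lessThan this] have "\<not> f x dvd 1"
    using lf_expand[OF assms(2) order_refl assms(3)] by simp
  with assms(4) show False by simp
qed


lemmas app_simps = plus_fun_apply minus_apply uminus_apply zero_fun_apply sm_apply ev_apply
declare plus_fun_apply[simp del] minus_apply[simp del] uminus_apply[simp del] zero_fun_apply[simp del]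
  sm_apply[simp del] ev_apply[simp del]

lemma four_x_aux: "(2::'a::comm_ring_1) ^ 2 * c - c - c = 2 * c"
  by (simp add: power2_eq_square algebra_simps)

locale qmod =
  fixes n :: nat and q :: "(nat \<Rightarrow> 'a::comm_ring_1) \<Rightarrow> 'a"
  assumes qm: "quadratic_module n q"
begin

abbreviation B where "B \<equiv> polar q"

lemma q_sm: "x \<in> vecs n \<Longrightarrow> q (sm a x) = a ^ 2 * q x"
  using qm unfolding qm_alt by simp

lemma q_zero[simp]: "q 0 = 0"
  using q_sm[of 0 0] by simp

lemma q_uminus: "x \<in> vecs n \<Longrightarrow> q (- x) = q x"
  using q_sm[of x "-1"] by (simp add: sm_m1)

lemma B_sym: "B x y = B y x"
  by (simp add: polar_alt add.commute)

lemma B_lin2: "x \<in> vecs n \<Longrightarrow> linear_form n (B x)"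
  using qm unfolding qm_alt by simp

lemma B_lin1: "y \<in> vecs n \<Longrightarrow> linear_form n (\<lambda>x. B x y)"
  using qm unfolding qm_alt by simp

lemma B_add2: "x \<in> vecs n \<Longrightarrow> y \<in> vecs n \<Longrightarrow> z \<in> vecs n \<Longrightarrow> B x (y + z) = B x y + B x z"
  by (rule lfD(1)[OF B_lin2])
lemma B_add1: "x \<in> vecs n \<Longrightarrow> y \<in> vecs n \<Longrightarrow> z \<in> vecs n \<Longrightarrow> B (y + z) x = B y x + B z x"
  using lfD(1)[OF B_lin1, of x y z] by simp
lemma B_sm2: "x \<in> vecs n \<Longrightarrow> y \<in> vecs n \<Longrightarrow> B x (sm a y) = a * B x y"
  by (rule lfD(2)[OF B_lin2])
lemma B_sm1: "x \<in> vecs n \<Longrightarrow> y \<in> vecs n \<Longrightarrow> B (sm a y) x = a * B y x"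
  using lfD(2)[OF B_lin1, of x y a] by simp
lemma B_diff2: "x \<in> vecs n \<Longrightarrow> y \<in> vecs n \<Longrightarrow> z \<in> vecs n \<Longrightarrow> B x (y - z) = B x y - B x z"
  by (rule lf_diff[OF B_lin2])
lemma B_diff1: "x \<in> vecs n \<Longrightarrow> y \<in> vecs n \<Longrightarrow> z \<in> vecs n \<Longrightarrow> B (y - z) x = B y x - B z x"
  using lf_diff[OF B_lin1, of x y z] by simp
lemma B_zero2[simp]: "B x 0 = 0"
  by (simp add: polar_alt)
lemma B_zero1[simp]: "B 0 x = 0"
  by (simp add: polar_alt)

lemma q_add: "q (x + y) = q x + q y + B x y"
  by (simp add: polar_alt)

lemma q_diff: "x \<in> vecs n \<Longrightarrow> y \<in> vecs n \<Longrightarrow> q (x - y) = q x + q y - B x y"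
proof -
  assume x: "x \<in> vecs n" and y: "y \<in> vecs n"
  have "q (x - y) = q (x + (- y))" by simp
  also have "\<dots> = q x + q (- y) + B x (- y)" by (rule q_add)
  also have "B x (- y) = - B x y" using lf_uminus[OF B_lin2[OF x] y] .
  finally show ?thesis using q_uminus[OF y] by simp
qed

lemma B_self: "x \<in> vecs n \<Longrightarrow> B x x = 2 * q x"
proof -
  assume x: "x \<in> vecs n"
  have e: "x + x = sm 2 x" by (rule ext) (simp only: app_simps mult_2)
  have "B x x = q (x + x) - q x - q x" by (simp only: polar_alt)
  also have "q (x + x) = q (sm 2 x)" by (simp only: e)
  also have "\<dots> = 2 ^ 2 * q x" by (rule q_sm[OF x])
  finally show ?thesis by (simp add: four_x_aux)
qed

lemmas Bsimps = B_add1 B_add2 B_sm1 B_sm2 B_diff1 B_diff2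

end

locale nsq = qmod +
  assumes inj: "\<forall>x\<in>vecs n. \<forall>x'\<in>vecs n. (\<forall>y\<in>vecs n. polar q x y = polar q x' y) \<longrightarrow> x = x'"
    and surj: "\<forall>f. linear_form n f \<longrightarrow> (\<exists>x\<in>vecs n. \<forall>y\<in>vecs n. polar q x y = f y)"

lemma nsq_iff: "nonsingular_qm n q \<longleftrightarrow> nsq n q"
  unfolding nonsingular_qm_def nsq_def nsq_axioms_def qmod_def by blast

lemma unit_inv: "(a::'a::comm_ring_1) dvd 1 \<Longrightarrow> \<exists>b. b * a = 1"
  by (metis dvdE mult.commute)

context nsq
begin

lemma iso_unit_coord:
  assumes LR: "local_ring TYPE('a)" and p: "p < n" and z: "z \<in> vecs n"
    and zi: "i < n" "z i \<notin> max_ideal" and qz: "q z = 0"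
  shows "\<exists>y\<in>vecs n. q y = 0 \<and> y p dvd 1"
proof -
  obtain di where di: "di * z i = 1" using zi unit_inv by (auto simp: max_ideal_def)
  obtain w where w: "w \<in> vecs n" "\<forall>y\<in>vecs n. B w y = di * y i"
    using surj lf_coord by blast
  have Bwz: "B w z = 1" using w z di by simp
  define w1 where "w1 = w - sm (q w) z"
  have w1: "w1 \<in> vecs n" using w z by (simp add: w1_def)
  have qw1: "q w1 = 0"
    using q_diff[OF w(1) vecs_sm[OF z]] q_sm[OF z] B_sm2[OF w(1) z] qz Bwz
    by (simp add: w1_def)
  have Bzw1: "B z w1 = 1"
    using B_diff2[OF z w(1) vecs_sm[OF z]] B_sm2[OF z z] B_self[OF z] qz Bwz B_sym[of z w]
    by (simp add: w1_def)
  show ?thesis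
  proof (cases "z p dvd 1")
    case True then show ?thesis using z qz by blast
  next
    case nz: False
    show ?thesis
    proof (cases "w1 p dvd 1")
      case True then show ?thesis using w1 qw1 by blast
    next
      case nw: False
      define e where "e = (ev p :: nat \<Rightarrow> 'a)"
      have e: "e \<in> vecs n" using p by (simp add: e_def)
      define v where "v = e - sm (B e w1) z - sm (B e z) w1"
      have v: "v \<in> vecs n" using e z w1 by (simp add: v_def)
      have vp: "v p = 1 + (- (z p * B e w1) - w1 p * B e z)"
        by (simp add: v_def e_def algebra_simps app_simps)
      have vpu: "v p dvd 1"
        unfolding vp
        by (rule unit_from_sum[OF LR]) (simp_all add: nonunit_diff[OF LR] nonunit_mult nz nw)
      have Bzv: "B z v = 0"
        using z e w1 B_self[OF z] qz Bzw1 B_sym[of z e]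
        by (simp add: v_def Bsimps)
      have Bw1v: "B w1 v = 0"
        using z e w1 B_self[OF w1] qw1 Bzw1 B_sym[of z w1] B_sym[of w1 e]
        by (simp add: v_def Bsimps)
      define a where "a = z - sm (q v) w1"
      have a: "a \<in> vecs n" using z w1 by (simp add: a_def)
      have qa: "q a = - q v"
        using q_diff[OF z vecs_sm[OF w1]] q_sm[OF w1] qw1 qz B_sm2[OF z w1] Bzw1
        by (simp add: a_def)
      have Bav: "B a v = 0"
        using B_diff1[OF v z vecs_sm[OF w1]] B_sm1[OF v w1] Bzv Bw1v
        by (simp add: a_def)
      define y where "y = a + v"
      have y: "y \<in> vecs n" using a v by (simp add: y_def)
      have qy: "q y = 0" using q_add[of a v] qa Bav by (simp add: y_def)
      have yp: "y p = v p + (z p - q v * w1 p)" by (simp add: y_def a_def app_simps)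
      have "y p dvd 1"
        unfolding yp
        by (rule unit_from_sum[OF LR vpu]) (simp add: nonunit_diff[OF LR] nonunit_mult nz nw mult.commute[of "q v"])
      then show ?thesis using y qy by blast
    qed
  qed
qed

end


definition trunc :: "nat \<Rightarrow> (nat \<Rightarrow> 'a::comm_ring_1) \<Rightarrow> nat \<Rightarrow> 'a" where
  "trunc n x i = (if i < n then x i else 0)"

definition adj :: "nat \<Rightarrow> ((nat \<Rightarrow> 'a::comm_ring_1) \<Rightarrow> 'a) \<Rightarrow> 'a \<Rightarrow> (nat \<Rightarrow> 'a) \<Rightarrow> 'a" where
  "adj n q b x = q (trunc n x) + b * (x n) ^ 2"

lemma trunc_vecs[simp]: "trunc n x \<in> vecs n" by (simp add: trunc_def vecs_def)
lemma trunc_add: "trunc n (x + y) = trunc n x + trunc n y"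
  by (rule ext) (simp add: trunc_def app_simps)
lemma trunc_sm: "trunc n (sm a x) = sm a (trunc n x)"
  by (rule ext) (simp add: trunc_def app_simps)
lemma trunc_id: "y \<in> vecs n \<Longrightarrow> trunc n y = y"
  by (rule ext) (simp add: trunc_def vecs_def)
lemma trunc_ev: "trunc n (ev n) = 0"
  by (rule ext) (simp add: trunc_def app_simps)
lemma trunc_decomp: "y \<in> vecs (Suc n) \<Longrightarrow> y = trunc n y + sm (y n) (ev n)"
  by (rule ext) (auto simp: trunc_def app_simps vecs_def less_Suc_eq)

lemma polar_adj: "polar (adj n q b) x y = polar q (trunc n x) (trunc n y) + (2 * b * x n) * y n"
  by (simp add: polar_alt adj_def trunc_add app_simps power2_eq_square algebra_simps)

lemma polar_adj': "polar (adj n q b) x y = polar q (trunc n x) (trunc n y) + (2 * b * y n) * x n"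
  by (simp add: polar_adj algebra_simps)

lemma unit_mult: "(a::'a::comm_ring_1) dvd 1 \<Longrightarrow> b dvd 1 \<Longrightarrow> (a * b) dvd 1"
  using mult_dvd_mono[of a 1 b 1] by simp

context nsq
begin

lemma adj_nsq:
  assumes b: "(2 * b) dvd 1"
  shows "nsq (Suc n) (adj n q b)"
proof -
  obtain d where d: "d * (2 * b) = 1" using unit_inv[OF b] by blast
  have qm': "quadratic_module (Suc n) (adj n q b)"
    unfolding qm_alt
  proof (intro conjI ballI allI)
    fix a and x :: "nat \<Rightarrow> 'a"
    show "adj n q b (sm a x) = a ^ 2 * adj n q b x"
      by (simp add: adj_def trunc_sm q_sm app_simps power_mult_distrib algebra_simps)
  next
    fix x :: "nat \<Rightarrow> 'a"
    have "linear_form (Suc n) (\<lambda>y. polar q (trunc n x) (trunc n y) + (2 * b * x n) * y n)"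
      by (rule lf_add[OF lf_comp[OF B_lin2] lf_coord]) (simp_all add: trunc_add trunc_sm)
    then show "linear_form (Suc n) (polar (adj n q b) x)"
      by (simp add: polar_adj[abs_def])
  next
    fix y :: "nat \<Rightarrow> 'a"
    have "linear_form (Suc n) (\<lambda>x. polar q (trunc n x) (trunc n y) + (2 * b * y n) * x n)"
      by (rule lf_add[OF lf_comp[OF B_lin1] lf_coord]) (simp_all add: trunc_add trunc_sm)
    then show "linear_form (Suc n) (\<lambda>x. polar (adj n q b) x y)"
      by (simp add: polar_adj')
  qed
  have inj': "\<forall>x\<in>vecs (Suc n). \<forall>x'\<in>vecs (Suc n).
      (\<forall>y\<in>vecs (Suc n). polar (adj n q b) x y = polar (adj n q b) x' y) \<longrightarrow> x = x'"
  proof (intro ballI impI)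
    fix x x' :: "nat \<Rightarrow> 'a"
    assume x: "x \<in> vecs (Suc n)" and x': "x' \<in> vecs (Suc n)"
      and h: "\<forall>y\<in>vecs (Suc n). polar (adj n q b) x y = polar (adj n q b) x' y"
    have "\<forall>y\<in>vecs n. B (trunc n x) y = B (trunc n x') y"
    proof
      fix y :: "nat \<Rightarrow> 'a" assume y: "y \<in> vecs n"
      then have y1: "y \<in> vecs (Suc n)" and y2: "y n = 0" by (auto simp: vecs_def)
      from bspec[OF h y1] show "B (trunc n x) y = B (trunc n x') y"
        using y2 by (simp add: polar_adj trunc_id[OF y])
    qed
    then have T: "trunc n x = trunc n x'" using inj by simp
    have "polar (adj n q b) x (ev n) = polar (adj n q b) x' (ev n)" using h by simp
    then have "2 * b * x n = 2 * b * x' n" by (simp add: polar_adj trunc_ev app_simps)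
    then have "d * (2 * b * x n) = d * (2 * b * x' n)" by simp
    then have xn: "x n = x' n" using d by (simp add: mult.assoc[symmetric])
    show "x = x'"
    proof (rule ext)
      fix i
      show "x i = x' i"
      proof (cases "i < n")
        case True then show ?thesis using fun_cong[OF T, of i] by (simp add: trunc_def)
      next
        case False
        then show ?thesis using xn x x' by (cases "i = n") (auto simp: vecs_def)
      qed
    qed
  qed
  have surj': "\<forall>f. linear_form (Suc n) f \<longrightarrow>
      (\<exists>x\<in>vecs (Suc n). \<forall>y\<in>vecs (Suc n). polar (adj n q b) x y = f y)"
  proof (intro allI impI)
    fix f :: "(nat \<Rightarrow> 'a) \<Rightarrow> 'a" assume f: "linear_form (Suc n) f"
    then have "linear_form n f" by (rule lf_mono) simp
    then obtain x0 where x0: "x0 \<in> vecs n" "\<forall>y\<in>vecs n. B x0 y = f y" using surj by blast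
    define x where "x = x0 + sm (d * f (ev n)) (ev n)"
    have xv: "x \<in> vecs (Suc n)" using x0 vecs_mono[OF x0(1)] by (simp add: x_def)
    have Tx: "trunc n x = x0" using x0
      by (simp add: x_def trunc_add trunc_sm trunc_ev trunc_id)
    have xn: "x n = d * f (ev n)" using x0 by (simp add: x_def app_simps vecs_def)
    have "\<forall>y\<in>vecs (Suc n). polar (adj n q b) x y = f y"
    proof
      fix y :: "nat \<Rightarrow> 'a" assume y: "y \<in> vecs (Suc n)"
      have "polar (adj n q b) x y = f (trunc n y) + (2 * b * d) * f (ev n) * y n"
        using x0 by (simp add: polar_adj Tx xn algebra_simps)
      also have "\<dots> = f (trunc n y) + y n * f (ev n)" using d by (simp add: algebra_simps)
      also have "\<dots> = f (trunc n y) + f (sm (y n) (ev n))" using lfD(2)[OF f] by simp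
      also have "\<dots> = f (trunc n y + sm (y n) (ev n))"
        using lfD(1)[OF f, of "trunc n y" "sm (y n) (ev n)"] vecs_mono[of "trunc n y" n "Suc n"] by simp
      also have "\<dots> = f y" using trunc_decomp[OF y] by simp
      finally show "polar (adj n q b) x y = f y" .
    qed
    then show "\<exists>x\<in>vecs (Suc n). \<forall>y\<in>vecs (Suc n). polar (adj n q b) x y = f y" using xv by blast
  qed
  show ?thesis unfolding nsq_def nsq_axioms_def qmod_def using qm' inj' surj' by blast
qed

lemma exists_unit_value:
  assumes LR: "local_ring TYPE('a)" and n: "0 < n"
  shows "\<exists>v\<in>vecs n. q v dvd 1"
proof -
  obtain x where x: "x \<in> vecs n" "\<forall>y\<in>vecs n. B x y = 1 * y 0"
    using surj lf_coord by blast
  have e: "ev 0 \<in> vecs n" using n by simp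
  have "B x (ev 0) = 1" using bspec[OF x(2) e] by (simp add: app_simps)
  then have "q (x + ev 0) - q x - q (ev 0) = 1" by (simp add: polar_alt)
  then have "\<not> (\<not> q (x + ev 0) dvd 1 \<and> \<not> q x dvd 1 \<and> \<not> q (ev 0) dvd 1)"
    using nonunit_diff[OF LR] by (metis dvd_refl)
  then show ?thesis using x e by auto
qed

end

lemma nsq_zero: "nsq 0 (\<lambda>x. (0::'a::comm_ring_1))"
proof -
  have v0: "\<And>x::nat\<Rightarrow>'a. x \<in> vecs 0 \<longleftrightarrow> x = 0"
    by (auto simp: vecs_def app_simps)
  have "quadratic_module 0 (\<lambda>x. (0::'a))"
    unfolding qm_alt lf_alt by (simp add: polar_alt)
  moreover have "\<forall>f. linear_form 0 f \<longrightarrow> (\<exists>x\<in>vecs 0. \<forall>y\<in>vecs 0. polar (\<lambda>x. (0::'a)) x y = f y)"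
    using lf_zero v0 by (auto simp: polar_alt)
  ultimately show ?thesis unfolding nsq_def nsq_axioms_def qmod_def using v0 by auto
qed


definition ins :: "nat \<Rightarrow> (nat \<Rightarrow> 'a::comm_ring_1) \<Rightarrow> nat \<Rightarrow> 'a" where
  "ins j y k = (if k < j then y k else if k = j then 0 else y (k - 1))"

definition del :: "nat \<Rightarrow> (nat \<Rightarrow> 'a::comm_ring_1) \<Rightarrow> nat \<Rightarrow> 'a" where
  "del j w k = (if k < j then w k else w (Suc k))"

lemma ins_add: "ins j (x + y) = ins j x + ins j y"
  by (rule ext) (simp add: ins_def app_simps)
lemma ins_sm: "ins j (sm a x) = sm a (ins j x)"
  by (rule ext) (simp add: ins_def app_simps)
lemma del_add: "del j (x + y) = del j x + del j y"
  by (rule ext) (simp add: del_def app_simps)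
lemma del_diff: "del j (x - y) = del j x - del j y"
  by (rule ext) (simp add: del_def app_simps)
lemma del_sm: "del j (sm a x) = sm a (del j x)"
  by (rule ext) (simp add: del_def app_simps)
lemma del_ins: "del j (ins j y) = y"
  by (rule ext) (simp add: del_def ins_def)
lemma del_ev: "del j (ev j) = 0"
  by (rule ext) (simp add: del_def app_simps)
lemma ins_del: "ins j (del j w) = w - sm (w j) (ev j)"
  by (rule ext) (auto simp: del_def ins_def app_simps)
lemma ins_vecs: "j < Suc m \<Longrightarrow> y \<in> vecs m \<Longrightarrow> ins j y \<in> vecs (Suc m)"
  by (simp add: vecs_def ins_def)
lemma del_vecs: "j < Suc m \<Longrightarrow> w \<in> vecs (Suc m) \<Longrightarrow> del j w \<in> vecs m"
  by (simp add: vecs_def del_def)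

context nsq
begin

lemma split_off:
  assumes LR: "local_ring TYPE('a)" and two: "(2::'a) dvd 1" and nm: "n = Suc m"
    and v: "v \<in> vecs n" and c: "q v dvd 1"
  shows "\<exists>L. (\<forall>y\<in>vecs m. L y \<in> vecs n \<and> B v (L y) = 0) \<and> nsq m (\<lambda>y. q (L y))"
proof -
  define l where "l = B v"
  have lf: "linear_form n l" unfolding l_def by (rule B_lin2[OF v])
  have lv: "l v dvd 1" unfolding l_def using B_self[OF v] unit_mult[OF two c] by simp
  have "\<exists>j<n. l (ev j) dvd 1"
  proof (rule ccontr)
    assume "\<not> ?thesis"
    then have "\<And>i. i \<in> {..<n} \<Longrightarrow> \<not> (v i * l (ev i)) dvd 1"
      using nonunit_mult by (metis lessThan_iff mult.commute)
    from sum_nonunit[OF LR finite_lessThan this] have "\<not> l v dvd 1"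
      using lf_expand[OF lf order_refl v] by (simp del: ev_apply)
    with lv show False by simp
  qed
  then obtain j where j: "j < n" "l (ev j) dvd 1" by blast
  have jm: "j < Suc m" using j nm by simp
  have ej: "ev j \<in> vecs n" using j by simp
  obtain dj where dj: "dj * l (ev j) = 1" using unit_inv[OF j(2)] by blast
  obtain dv where dv: "dv * l v = 1" using unit_inv[OF lv] by blast
  define L where "L y = ins j y - sm (dj * l (ins j y)) (ev j)" for y :: "nat \<Rightarrow> 'a"
  define P where "P x = x - sm (dv * l x) v" for x :: "nat \<Rightarrow> 'a"
  have insv: "y \<in> vecs m \<Longrightarrow> ins j y \<in> vecs n" for y :: "nat \<Rightarrow> 'a" using ins_vecs[OF jm] nm by simp
  have delv: "w \<in> vecs n \<Longrightarrow> del j w \<in> vecs m" for w :: "nat \<Rightarrow> 'a" using del_vecs[OF jm] nm by simp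
  have Lv: "y \<in> vecs m \<Longrightarrow> L y \<in> vecs n" for y :: "nat \<Rightarrow> 'a"
    unfolding L_def by (rule vecs_diff[OF insv vecs_sm[OF ej]])
  have lL: "y \<in> vecs m \<Longrightarrow> l (L y) = 0" for y :: "nat \<Rightarrow> 'a"
  proof -
    assume y: "y \<in> vecs m"
    have "l (L y) = l (ins j y) - l (sm (dj * l (ins j y)) (ev j))"
      unfolding L_def by (rule lf_diff[OF lf insv[OF y] vecs_sm[OF ej]])
    also have "\<dots> = l (ins j y) - (dj * l (ins j y)) * l (ev j)" using lfD(2)[OF lf ej] by simp
    also have "\<dots> = l (ins j y) * (1 - dj * l (ev j))" by (simp add: algebra_simps)
    finally show ?thesis using dj by simp
  qed
  have Ladd: "y \<in> vecs m \<Longrightarrow> y' \<in> vecs m \<Longrightarrow> L (y + y') = L y + L y'" for y y' :: "nat \<Rightarrow> 'a"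
    using insv[of y] insv[of y'] lfD(1)[OF lf]
    by (simp add: L_def ins_add distrib_left sm_add2 algebra_simps)
  have Lsm: "y \<in> vecs m \<Longrightarrow> L (sm a y) = sm a (L y)" for a and y :: "nat \<Rightarrow> 'a"
    using insv[of y] lfD(2)[OF lf]
    by (simp add: L_def ins_sm sm_diff sm_sm algebra_simps)
  have delL: "del j (L y) = y" for y :: "nat \<Rightarrow> 'a"
    by (simp add: L_def del_diff del_sm del_ins del_ev)
  have Ldel: "w \<in> vecs n \<Longrightarrow> l w = 0 \<Longrightarrow> L (del j w) = w" for w :: "nat \<Rightarrow> 'a"
  proof -
    assume w: "w \<in> vecs n" and lw: "l w = 0"
    have "l (ins j (del j w)) = - (w j * l (ev j))"
      unfolding ins_del using lf_diff[OF lf w vecs_sm[OF ej]] lfD(2)[OF lf ej] lw by simp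
    then have "dj * l (ins j (del j w)) = - (w j * (dj * l (ev j)))" by (simp add: mult.left_commute)
    then have "dj * l (ins j (del j w)) = - w j" using dj by simp
    then show "L (del j w) = w" by (rule_tac ext) (simp add: L_def ins_del app_simps)
  qed
  have Pv: "x \<in> vecs n \<Longrightarrow> P x \<in> vecs n" for x :: "nat \<Rightarrow> 'a" using v by (simp add: P_def)
  have lP: "x \<in> vecs n \<Longrightarrow> l (P x) = 0" for x :: "nat \<Rightarrow> 'a"
    using lf_diff[OF lf] lfD(2)[OF lf v] dv v
    by (simp add: P_def mult.assoc mult.left_commute[of dv])
  have PL: "l x = 0 \<Longrightarrow> P x = x" for x :: "nat \<Rightarrow> 'a" by (simp add: P_def)
  have Padd: "x \<in> vecs n \<Longrightarrow> x' \<in> vecs n \<Longrightarrow> P (x + x') = P x + P x'" for x x' :: "nat \<Rightarrow> 'a"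
    using lfD(1)[OF lf] by (simp add: P_def distrib_left sm_add2 algebra_simps)
  have Psm: "x \<in> vecs n \<Longrightarrow> P (sm a x) = sm a (P x)" for a and x :: "nat \<Rightarrow> 'a"
    using lfD(2)[OF lf] by (simp add: P_def sm_diff sm_sm algebra_simps)
  define psi where "psi y = q (L y)" for y :: "nat \<Rightarrow> 'a"
  have polpsi: "y \<in> vecs m \<Longrightarrow> y' \<in> vecs m \<Longrightarrow> polar psi y y' = B (L y) (L y')" for y y' :: "nat \<Rightarrow> 'a"
    by (simp add: polar_alt psi_def Ladd)
  have qm': "quadratic_module m psi"
    unfolding qm_alt
  proof (intro conjI ballI allI)
    fix a and y :: "nat \<Rightarrow> 'a" assume y: "y \<in> vecs m"
    show "psi (sm a y) = a ^ 2 * psi y" using y Lv by (simp add: psi_def Lsm q_sm)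
  next
    fix y :: "nat \<Rightarrow> 'a" assume y: "y \<in> vecs m"
    have "linear_form m (\<lambda>y'. B (L y) (L y'))"
      by (rule lf_comp[OF B_lin2[OF Lv[OF y]]]) (simp_all add: Lv Ladd Lsm)
    then show "linear_form m (polar psi y)"
      by (subst lf_cong[where g="\<lambda>y'. B (L y) (L y')"]) (simp_all add: polpsi y)
  next
    fix y :: "nat \<Rightarrow> 'a" assume y: "y \<in> vecs m"
    have "linear_form m (\<lambda>y'. B (L y') (L y))"
      by (rule lf_comp[OF B_lin1[OF Lv[OF y]]]) (simp_all add: Lv Ladd Lsm)
    then show "linear_form m (\<lambda>x. polar psi x y)"
      by (subst lf_cong[where g="\<lambda>y'. B (L y') (L y)"]) (simp_all add: polpsi y)
  qed
  have Bv0: "y \<in> vecs m \<Longrightarrow> B v (L y) = 0" for y :: "nat \<Rightarrow> 'a" using lL unfolding l_def .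
  have inj': "\<forall>x\<in>vecs m. \<forall>x'\<in>vecs m. (\<forall>y\<in>vecs m. polar psi x y = polar psi x' y) \<longrightarrow> x = x'"
  proof (intro ballI impI)
    fix y y' :: "nat \<Rightarrow> 'a"
    assume y: "y \<in> vecs m" and y': "y' \<in> vecs m"
      and h: "\<forall>z\<in>vecs m. polar psi y z = polar psi y' z"
    define dd where "dd = L y - L y'"
    have dd: "dd \<in> vecs n" using Lv y y' by (simp add: dd_def)
    have "\<forall>x\<in>vecs n. B dd x = B 0 x"
    proof
      fix x :: "nat \<Rightarrow> 'a" assume x: "x \<in> vecs n"
      have x_eq: "x = P x + sm (dv * l x) v" by (simp add: P_def)
      have z: "del j (P x) \<in> vecs m" using delv Pv x by simp
      have LP: "L (del j (P x)) = P x" using Ldel Pv lP x by simp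
      have "B dd (P x) = 0"
        using bspec[OF h z] polpsi[OF y z] polpsi[OF y' z] LP B_diff1[OF Pv[OF x] Lv[OF y] Lv[OF y']]
        by (simp add: dd_def)
      moreover have "B dd v = 0"
        using B_diff1[OF v Lv[OF y] Lv[OF y']] Bv0[OF y] Bv0[OF y'] B_sym[of v]
        by (simp add: dd_def)
      moreover have "B dd (P x + sm (dv * l x) v) = B dd (P x) + dv * l x * B dd v"
        using B_add2[OF dd Pv[OF x] vecs_sm[OF v]] B_sm2[OF dd v] by simp
      then have "B dd x = B dd (P x) + dv * l x * B dd v"
        by (simp only: x_eq[symmetric])
      ultimately show "B dd x = B 0 x" by simp
    qed
    then have "dd = 0" using inj dd by auto
    then have "L y = L y'" by (simp add: dd_def)
    then show "y = y'" using delL by metis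
  qed
  have surj': "\<forall>f. linear_form m f \<longrightarrow> (\<exists>x\<in>vecs m. \<forall>y\<in>vecs m. polar psi x y = f y)"
  proof (intro allI impI)
    fix f :: "(nat \<Rightarrow> 'a) \<Rightarrow> 'a" assume f: "linear_form m f"
    have "linear_form n (\<lambda>x. f (del j (P x)))"
      by (rule lf_comp[OF f]) (simp_all add: delv Pv Padd Psm del_add del_sm)
    then obtain x0 where x0: "x0 \<in> vecs n" "\<forall>x\<in>vecs n. B x0 x = f (del j (P x))"
      using surj by blast
    define y0 where "y0 = del j (P x0)"
    have y0: "y0 \<in> vecs m" using delv Pv x0 by (simp add: y0_def)
    have Ly0: "L y0 = P x0" using Ldel Pv lP x0 by (simp add: y0_def)
    have "\<forall>y\<in>vecs m. polar psi y0 y = f y"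
    proof
      fix y :: "nat \<Rightarrow> 'a" assume y: "y \<in> vecs m"
      have "polar psi y0 y = B (P x0) (L y)" using polpsi[OF y0 y] Ly0 by simp
      also have "\<dots> = B x0 (L y) - dv * l x0 * B v (L y)"
        unfolding P_def using B_diff1[OF Lv[OF y] x0(1) vecs_sm[OF v]] B_sm1[OF Lv[OF y] v] by simp
      also have "\<dots> = B x0 (L y)" using Bv0[OF y] by simp
      also have "\<dots> = f (del j (P (L y)))" using bspec[OF x0(2) Lv[OF y]] .
      also have "\<dots> = f y" using PL[OF lL[OF y]] delL by simp
      finally show "polar psi y0 y = f y" .
    qed
    then show "\<exists>x\<in>vecs m. \<forall>y\<in>vecs m. polar psi x y = f y" using y0 by blast
  qed
  have "nsq m psi" unfolding nsq_def nsq_axioms_def qmod_def using qm' inj' surj' by blast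
  then show ?thesis using Lv Bv0 unfolding psi_def[abs_def] by blast
qed

end


theorem propositionA2:
  assumes "local_ring TYPE('a::comm_ring_1)"
    and "(2::'a) dvd 1"
  shows "u_invariant TYPE('a) =
    (LEAST u::enat. 1 \<le> u \<and>
       (\<forall>n (q :: (nat \<Rightarrow> 'a) \<Rightarrow> 'a). nonsingular_qm n q \<and> u \<le> enat n \<longrightarrow> universal n q))"
proof -
  note LR = assms(1) and two = assms(2)
  define S where "S = {enat n | n. \<exists>q :: (nat \<Rightarrow> 'a) \<Rightarrow> 'a. nonsingular_qm n q \<and> anisotropic n q}"
  have u0: "u_invariant TYPE('a) = Sup S" by (simp add: u_invariant_def S_def)
  define Pr where "Pr u \<longleftrightarrow> 1 \<le> u \<and>
       (\<forall>n (q :: (nat \<Rightarrow> 'a) \<Rightarrow> 'a). nonsingular_qm n q \<and> u \<le> enat n \<longrightarrow> universal n q)" for u :: enat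
  have one: "enat 1 \<in> S"
  proof -
    define q1 where "q1 = adj 0 (\<lambda>x. 0) (1::'a)"
    have "nsq (Suc 0) q1" unfolding q1_def
      by (rule nsq.adj_nsq[OF nsq_zero]) (simp add: two)
    moreover have "anisotropic 1 q1"
    proof -
      { fix x :: "nat \<Rightarrow> 'a" and i
        assume "i < 1" "x i \<notin> max_ideal" "q1 x = 0"
        then have u: "x 0 dvd 1" and z: "(x 0) ^ 2 = 0"
          by (auto simp: max_ideal_def q1_def adj_def)
        have "(x 0) ^ 2 dvd 1" using unit_mult[OF u u] by (simp add: power2_eq_square)
        with z zero_nonunit[OF LR] have False by simp }
      then show ?thesis unfolding anisotropic_def isotropic_def by blast
    qed
    ultimately show ?thesis unfolding S_def nsq_iff by auto
  qed
  have P0: "Pr (Sup S)"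
    unfolding Pr_def
  proof (intro conjI allI impI)
    show "1 \<le> Sup S" using Sup_upper[OF one] by (simp add: one_enat_def)
  next
    fix n and q :: "(nat \<Rightarrow> 'a) \<Rightarrow> 'a"
    assume h: "nonsingular_qm n q \<and> Sup S \<le> enat n"
    then interpret F: nsq n q by (simp add: nsq_iff)
    show "universal n q" unfolding universal_def
    proof (intro allI impI)
      fix a :: 'a assume a: "a dvd 1"
      have b: "(2 * (- a)) dvd 1" using unit_mult[OF two, of "- a"] a by simp
      define Q where "Q = adj n q (- a)"
      interpret G: nsq "Suc n" Q unfolding Q_def by (rule F.adj_nsq[OF b])
      have "\<not> anisotropic (Suc n) Q"
      proof
        assume "anisotropic (Suc n) Q"
        then have "enat (Suc n) \<in> S" unfolding S_def nsq_iff using G.nsq_axioms by auto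
        then have "enat (Suc n) \<le> enat n" using Sup_upper h order_trans by blast
        then show False by simp
      qed
      then obtain z i where z: "z \<in> vecs (Suc n)" "i < Suc n" "z i \<notin> max_ideal" "Q z = 0"
        unfolding anisotropic_def isotropic_def by blast
      obtain y where y: "y \<in> vecs (Suc n)" "Q y = 0" "y n dvd 1"
        using G.iso_unit_coord[OF LR _ z(1) z(2) z(3) z(4), of n] by auto
      obtain d where d: "d * y n = 1" using unit_inv[OF y(3)] by blast
      have qt: "q (trunc n y) = a * (y n) ^ 2" using y(2) by (simp add: Q_def adj_def)
      have "q (sm d (trunc n y)) = d ^ 2 * (a * (y n) ^ 2)" using F.q_sm[OF trunc_vecs] qt by simp
      also have "\<dots> = a * (d * y n) ^ 2" by (simp add: power_mult_distrib algebra_simps)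
      also have "\<dots> = a" using d by simp
      finally show "\<exists>x\<in>vecs n. q x = a" using vecs_sm[OF trunc_vecs] by blast
    qed
  qed
  have least: "Sup S \<le> u" if Pu: "Pr u" for u
  proof (rule Sup_least)
    fix s assume "s \<in> S"
    then obtain m and phi :: "(nat \<Rightarrow> 'a) \<Rightarrow> 'a" where s: "s = enat m" and
      ns: "nsq m phi" and an: "anisotropic m phi"
      unfolding S_def nsq_iff by blast
    interpret F: nsq m phi by (rule ns)
    show "s \<le> u"
    proof (rule ccontr)
      assume "\<not> s \<le> u"
      then have lt: "u < enat m" using s by simp
      then obtain k where k: "u = enat k" "k < m" by (cases u) auto
      have k1: "1 \<le> k" using Pu k by (simp add: Pr_def one_enat_def)
      obtain m' where m': "m = Suc m'" using k by (cases m) auto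
      have km: "k \<le> m'" using k m' by simp
      obtain v where v: "v \<in> vecs m" "phi v dvd 1"
        using F.exists_unit_value[OF LR] m' by auto
      obtain L where L: "\<forall>y\<in>vecs m'. L y \<in> vecs m \<and> F.B v (L y) = 0"
        and nL: "nsq m' (\<lambda>y. phi (L y))"
        using F.split_off[OF LR two m' v] by blast
      have "universal m' (\<lambda>y. phi (L y))"
        using Pu nL km k unfolding Pr_def nsq_iff by auto
      moreover have "(- phi v) dvd 1" using v by simp
      ultimately obtain y where y: "y \<in> vecs m'" "phi (L y) = - phi v"
        unfolding universal_def by blast
      have Ly: "L y \<in> vecs m" "F.B v (L y) = 0" using L y(1) by auto
      define z where "z = v + L y"
      have zv: "z \<in> vecs m" using v Ly by (simp add: z_def)
      have qz: "phi z = 0" using F.q_add[of v "L y"] y(2) Ly by (simp add: z_def)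
      have "F.B v z = 2 * phi v"
        using F.B_add2[OF v(1) v(1) Ly(1)] F.B_self[OF v(1)] Ly by (simp add: z_def)
      then have "F.B v z dvd 1" using unit_mult[OF two v(2)] by simp
      then obtain i where "i < m" "z i \<notin> max_ideal"
        using primitive_of_lf[OF LR F.B_lin2[OF v(1)] zv] by blast
      then have "isotropic m phi" unfolding isotropic_def using zv qz by blast
      then show False using an unfolding anisotropic_def by blast
    qed
  qed
  have "(LEAST u. Pr u) = Sup S"
    by (rule Least_equality[of Pr, OF P0 least])
  then show ?thesis using u0 unfolding Pr_def by simp
qed

end
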